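(* Let $H$ be a Hermitian operator on $n$ qubits, $\beta>0$, $\rho_\beta=e^{-\beta H}/\operatorname{tr}(e^{-\beta H})$, and let $O$ be a Hermitian observable with $[H,O]=0$. Then for any parameters $\kappa\ge\|O\|$ ($\kappa>0$), positive integer $m$ and $\gamma>0$, the GQPE measurement channel $\mathcal M$ and the associated map $\widehat{\mathcal M}$ both satisfy $s$-detailed balance with respect to $\rho_\beta$ for every $0\le s\le1$.
   Context: GQPE channel: given $O$, $\kappa$, $m$, $\gamma$, set $N=2^{2m}$, $h=2^{-m}$, $\omega_j=(j-N/2)h$ for $j=0,\dots,N-1$, $\xi_\ell=(\ell-N/2)h$, $\widehat g_\gamma(\xi)=(2\sqrt{2\pi}\gamma)^{1/2}e^{-4\pi^2\gamma^2\xi^2}$, $C=\big(h\sum_{\ell=1}^{N-1}\widehat g_\gamma(\xi_\ell)^2\big)^{1/2}$, $\tilde O=O/\kappa$, and Kraus operators $O_j=\frac{h^{3/2}}{C}\sum_{\ell=1}^{N-1}e^{2\pi i\xi_\ell(\omega_jI-\tilde O)}\widehat g_\gamma(\xi_\ell)$, $j=0,\dots,N-1$, so $\mathcal M(\rho)=\sum_jO_j\rho O_j^\dagger$ (a quantum channel). The outcome attached to index $j$ is $w_j=\kappa Z_j$, where $Z_j=\omega_j$ if $|\omega_j|\le2$ and $Z_j=0$ otherwise. With $\mathbb E_{\rho_\beta}(\mathcal M)=\sum_jw_j\operatorname{tr}(O_j\rho_\beta O_j^\dagger)$, define $\widehat{\mathcal M}(X)=\sum_j(w_j-\mathbb E_{\rho_\beta}(\mathcal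 M))O_jXO_j^\dagger$. For $s\in[0,1]$, $\langle A,B\rangle_s=\operatorname{tr}(A^\dagger\rho_\beta^{1-s}B\rho_\beta^s)$; a linear map $\mathcal T$ satisfies $s$-detailed balance w.r.t. $\rho_\beta$ if $\langle A,\mathcal T^\dagger(B)\rangle_s=\langle\mathcal T^\dagger(A),B\rangle_s$ for all $A,B$, where $\mathcal T^\dagger$ is the Hilbert–Schmidt adjoint. *)

theory Defs
  imports Complex_Main "Jordan_Normal_Form.Schur_Decomposition"
begin

definition mtrace :: "complex mat \<Rightarrow> complex" where
  "mtrace A = (\<Sum>i<dim_row A. A $$ (i, i))"

definition hermitian :: "complex mat \<Rightarrow> bool" where
  "hermitian A \<longleftrightarrow> A \<in> carrier_mat (dim_row A) (dim_row A) \<and> mat_adjoint A = A"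

definition unitary :: "complex mat \<Rightarrow> bool" where
  "unitary U \<longleftrightarrow> U \<in> carrier_mat (dim_row U) (dim_row U) \<and>
     U * mat_adjoint U = 1\<^sub>m (dim_row U) \<and> mat_adjoint U * U = 1\<^sub>m (dim_row U)"

definition dmat :: "complex list \<Rightarrow> complex mat" where
  "dmat xs = mat (length xs) (length xs) (\<lambda>(i, j). if i = j then xs ! i else 0)"

definition mexp :: "complex mat \<Rightarrow> complex mat" where
  "mexp A = mat (dim_row A) (dim_col A)
     (\<lambda>(i, j). \<Sum>k. (A ^\<^sub>m k) $$ (i, j) / of_nat (fact k))"

definition herm_fun :: "(real \<Rightarrow> complex) \<Rightarrow> complex mat \<Rightarrow> complex mat" where
  "herm_fun f A = (SOME B. \<exists>U lam. unitary U \<and> dim_row U = dim_row A \<and>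
       length lam = dim_row A \<and>
       A = U * dmat (map complex_of_real lam) * mat_adjoint U \<and>
       B = U * dmat (map f lam) * mat_adjoint U)"

definition mpow :: "complex mat \<Rightarrow> real \<Rightarrow> complex mat" where
  "mpow A s = herm_fun (\<lambda>x. complex_of_real (x powr s)) A"

definition vnorm :: "complex vec \<Rightarrow> real" where
  "vnorm v = sqrt (\<Sum>i<dim_vec v. (cmod (v $ i))\<^sup>2)"

definition opnorm :: "complex mat \<Rightarrow> real" where
  "opnorm A = Sup {vnorm (A *\<^sub>v v) | v. v \<in> carrier_vec (dim_col A) \<and> vnorm v = 1}"

definition msum :: "nat \<Rightarrow> ('i \<Rightarrow> complex mat) \<Rightarrow> 'i set \<Rightarrow> complex mat" where
  "msum d F S = mat d d (\<lambda>ij. \<Sum>x\<in>S. F x $$ ij)"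

definition gibbs :: "real \<Rightarrow> complex mat \<Rightarrow> complex mat" where
  "gibbs \<beta> H = (1 / mtrace (mexp (complex_of_real (- \<beta>) \<cdot>\<^sub>m H))) \<cdot>\<^sub>m
                  mexp (complex_of_real (- \<beta>) \<cdot>\<^sub>m H)"

definition inner_s :: "complex mat \<Rightarrow> real \<Rightarrow> complex mat \<Rightarrow> complex mat \<Rightarrow> complex" where
  "inner_s \<rho> s A B = mtrace (mat_adjoint A * mpow \<rho> (1 - s) * B * mpow \<rho> s)"

definition hs_adjoint :: "nat \<Rightarrow> (complex mat \<Rightarrow> complex mat) \<Rightarrow> complex mat \<Rightarrow> complex mat" where
  "hs_adjoint d T = (SOME S. (\<forall>X \<in> carrier_mat d d. S X \<in> carrier_mat d d) \<and>
      (\<forall>X \<in> carrier_mat d d. \<forall>Y \<in> carrier_mat d d.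
          mtrace (mat_adjoint X * T Y) = mtrace (mat_adjoint (S X) * Y)))"

definition s_detailed_balance ::
  "nat \<Rightarrow> (complex mat \<Rightarrow> complex mat) \<Rightarrow> complex mat \<Rightarrow> real \<Rightarrow> bool" where
  "s_detailed_balance d T \<rho> s \<longleftrightarrow>
     (\<forall>A \<in> carrier_mat d d. \<forall>B \<in> carrier_mat d d.
        inner_s \<rho> s A (hs_adjoint d T B) = inner_s \<rho> s (hs_adjoint d T A) B)"

definition gqpe_N :: "nat \<Rightarrow> nat" where "gqpe_N m = 2 ^ (2 * m)"
definition gqpe_h :: "nat \<Rightarrow> real" where "gqpe_h m = 2 powr (- real m)"
definition gqpe_grid :: "nat \<Rightarrow> nat \<Rightarrow> real" where
  "gqpe_grid m j = (real j - real (gqpe_N m) / 2) * gqpe_h m"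

definition ghat :: "real \<Rightarrow> real \<Rightarrow> real" where
  "ghat \<gamma> \<xi> = sqrt (2 * sqrt (2 * pi) * \<gamma>) * exp (- 4 * pi\<^sup>2 * \<gamma>\<^sup>2 * \<xi>\<^sup>2)"

definition gqpe_C :: "nat \<Rightarrow> real \<Rightarrow> real" where
  "gqpe_C m \<gamma> = sqrt (gqpe_h m * (\<Sum>l\<in>{1..<gqpe_N m}. (ghat \<gamma> (gqpe_grid m l))\<^sup>2))"

definition gqpe_kraus :: "complex mat \<Rightarrow> real \<Rightarrow> nat \<Rightarrow> real \<Rightarrow> nat \<Rightarrow> complex mat" where
  "gqpe_kraus Obs \<kappa> m \<gamma> j =
     (let d = dim_row Obs; Ot = complex_of_real (1 / \<kappa>) \<cdot>\<^sub>m Obs in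
      complex_of_real (gqpe_h m powr (3/2) / gqpe_C m \<gamma>) \<cdot>\<^sub>m
        msum d (\<lambda>l. complex_of_real (ghat \<gamma> (gqpe_grid m l)) \<cdot>\<^sub>m
           mexp ((2 * pi * \<i> * complex_of_real (gqpe_grid m l)) \<cdot>\<^sub>m
                 (complex_of_real (gqpe_grid m j) \<cdot>\<^sub>m 1\<^sub>m d - Ot))) {1..<gqpe_N m})"

definition gqpe_Z :: "nat \<Rightarrow> nat \<Rightarrow> real" where
  "gqpe_Z m j = (if \<bar>gqpe_grid m j\<bar> \<le> 2 then gqpe_grid m j else 0)"

definition gqpe_w :: "real \<Rightarrow> nat \<Rightarrow> nat \<Rightarrow> real" where
  "gqpe_w \<kappa> m j = \<kappa> * gqpe_Z m j"

definition gqpe_channel :: "complex mat \<Rightarrow> real \<Rightarrow> nat \<Rightarrow> real \<Rightarrow> complex mat \<Rightarrow> complex mat" where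
  "gqpe_channel Obs \<kappa> m \<gamma> X =
     msum (dim_row Obs) (\<lambda>j. gqpe_kraus Obs \<kappa> m \<gamma> j * X * mat_adjoint (gqpe_kraus Obs \<kappa> m \<gamma> j))
       {0..<gqpe_N m}"

definition gqpe_expect :: "complex mat \<Rightarrow> real \<Rightarrow> nat \<Rightarrow> real \<Rightarrow> complex mat \<Rightarrow> complex" where
  "gqpe_expect Obs \<kappa> m \<gamma> \<rho> =
     (\<Sum>j\<in>{0..<gqpe_N m}. complex_of_real (gqpe_w \<kappa> m j) *
        mtrace (gqpe_kraus Obs \<kappa> m \<gamma> j * \<rho> * mat_adjoint (gqpe_kraus Obs \<kappa> m \<gamma> j)))"

definition gqpe_hat :: "complex mat \<Rightarrow> real \<Rightarrow> nat \<Rightarrow> real \<Rightarrow> complex mat \<Rightarrow> complex mat \<Rightarrow> complex mat" where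
  "gqpe_hat Obs \<kappa> m \<gamma> \<rho> X =
     msum (dim_row Obs) (\<lambda>j. (complex_of_real (gqpe_w \<kappa> m j) - gqpe_expect Obs \<kappa> m \<gamma> \<rho>) \<cdot>\<^sub>m
        (gqpe_kraus Obs \<kappa> m \<gamma> j * X * mat_adjoint (gqpe_kraus Obs \<kappa> m \<gamma> j))) {0..<gqpe_N m}"

end

theory Submission
  imports Defs
begin


lemma adj_dim[simp]: "dim_row (mat_adjoint A) = dim_col A" "dim_col (mat_adjoint A) = dim_row A"
  by (auto simp: mat_adjoint_def)

lemma adj_carrier[simp]: "A \<in> carrier_mat n m \<Longrightarrow> mat_adjoint A \<in> carrier_mat m n"
  unfolding carrier_mat_def by simp

lemma adj_index[simp]: "i < dim_col A \<Longrightarrow> j < dim_row A \<Longrightarrow> mat_adjoint A $$ (i,j) = cnj (A $$ (j,i))"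
  by (auto simp: mat_adjoint_def mat_of_rows_def)


lemma adj_adj[simp]: "mat_adjoint (mat_adjoint (A :: complex mat)) = A"
proof (rule eq_matI)
  fix i j assume "i < dim_row A" "j < dim_col A"
  thus "mat_adjoint (mat_adjoint A) $$ (i, j) = A $$ (i, j)"
    using adj_index[of i "mat_adjoint A" j] adj_index[of j A i] by simp
qed auto

lemma adj_mult: fixes A :: "complex mat" assumes "A \<in> carrier_mat n k" "B \<in> carrier_mat k m"
  shows "mat_adjoint (A * B) = mat_adjoint B * mat_adjoint A"
proof -
  have d: "dim_row A = n" "dim_col A = k" "dim_row B = k" "dim_col B = m" using assms by auto
  show ?thesis
  proof (rule eq_matI)
    fix i j assume "i < dim_row (mat_adjoint B * mat_adjoint A)" "j < dim_col (mat_adjoint B * mat_adjoint A)"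
    hence ij: "i < m" "j < n" using d by auto
    have "mat_adjoint (A * B) $$ (i,j) = cnj (\<Sum>l<k. A $$ (j,l) * B $$ (l,i))"
      using ij d by (simp add: scalar_prod_def atLeast0LessThan)
    also have "\<dots> = (\<Sum>l<k. cnj (B $$ (l,i)) * cnj (A $$ (j,l)))"
      by (simp add: mult.commute)
    also have "\<dots> = (mat_adjoint B * mat_adjoint A) $$ (i,j)"
      using ij d by (simp add: scalar_prod_def atLeast0LessThan)
    finally show "mat_adjoint (A * B) $$ (i,j) = (mat_adjoint B * mat_adjoint A) $$ (i,j)" .
  qed (use d in auto)
qed

lemma adj_smult: "mat_adjoint (c \<cdot>\<^sub>m A) = cnj c \<cdot>\<^sub>m mat_adjoint A"
  by (rule eq_matI, auto)

lemma adj_add: fixes A :: "complex mat" assumes "A \<in> carrier_mat n m" "B \<in> carrier_mat n m"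
  shows "mat_adjoint (A + B) = mat_adjoint A + mat_adjoint B"
  by (rule eq_matI, insert assms, auto)

lemma adj_minus: fixes A :: "complex mat" assumes "A \<in> carrier_mat n m" "B \<in> carrier_mat n m"
  shows "mat_adjoint (A - B) = mat_adjoint A - mat_adjoint B"
  by (rule eq_matI, insert assms, auto)

lemma adj_one[simp]: "mat_adjoint (1\<^sub>m n :: complex mat) = 1\<^sub>m n"
  by (rule eq_matI, auto)

lemma mtrace_comm: assumes "A \<in> carrier_mat n m" "B \<in> carrier_mat m n"
  shows "mtrace (A * B) = mtrace (B * A)"
proof -
  have "mtrace (A * B) = (\<Sum>i<n. \<Sum>k<m. A $$ (i,k) * B $$ (k,i))"
    using assms by (auto simp: mtrace_def scalar_prod_def atLeast0LessThan intro!: sum.cong)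
  also have "\<dots> = (\<Sum>k<m. \<Sum>i<n. B $$ (k,i) * A $$ (i,k))"
    by (subst sum.swap) (simp add: mult.commute)
  also have "\<dots> = mtrace (B * A)"
    using assms by (auto simp: mtrace_def scalar_prod_def atLeast0LessThan intro!: sum.cong)
  finally show ?thesis .
qed

lemma mtrace_adj: "mtrace (mat_adjoint A) = cnj (mtrace A)" if "A \<in> carrier_mat n n"
  using that by (auto simp: mtrace_def cnj_sum)

lemma mtrace_smult: "A \<in> carrier_mat n n \<Longrightarrow> mtrace (c \<cdot>\<^sub>m A) = c * mtrace A"
  unfolding mtrace_def by (simp add: sum_distrib_left)

lemma msum_carrier[simp]: "msum d F S \<in> carrier_mat d d"
  by (auto simp: msum_def)

lemma msum_dim[simp]: "dim_row (msum d F S) = d" "dim_col (msum d F S) = d"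
  by (auto simp: msum_def)

lemma msum_index[simp]: "i < d \<Longrightarrow> j < d \<Longrightarrow> msum d F S $$ (i,j) = (\<Sum>x\<in>S. F x $$ (i,j))"
  by (auto simp: msum_def)

lemma msum_mult_left: assumes "M \<in> carrier_mat d d" "\<And>x. x \<in> S \<Longrightarrow> F x \<in> carrier_mat d d"
  shows "M * msum d F S = msum d (\<lambda>x. M * F x) S"
proof -
  have Fd: "dim_row (F x) = d" "dim_col (F x) = d" if "x \<in> S" for x using assms(2)[OF that] by auto
  have Md: "dim_row M = d" "dim_col M = d" using assms(1) by auto
  show ?thesis
  proof (rule eq_matI)
  fix i j assume ij: "i < dim_row (msum d (\<lambda>x. M * F x) S)" "j < dim_col (msum d (\<lambda>x. M * F x) S)"
  have "(M * msum d F S) $$ (i,j) = (\<Sum>k<d. M $$ (i,k) * (\<Sum>x\<in>S. F x $$ (k,j)))"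
    using ij Fd Md by (auto simp: scalar_prod_def atLeast0LessThan intro!: sum.cong)
  also have "\<dots> = (\<Sum>x\<in>S. \<Sum>k<d. M $$ (i,k) * F x $$ (k,j))"
    by (simp add: sum_distrib_left sum.swap[of _ S])
  also have "\<dots> = msum d (\<lambda>x. M * F x) S $$ (i,j)"
    using ij Fd Md by (auto simp: scalar_prod_def atLeast0LessThan intro!: sum.cong)
  finally show "(M * msum d F S) $$ (i,j) = msum d (\<lambda>x. M * F x) S $$ (i,j)" .
qed (use Fd Md in auto)
qed

lemma msum_mult_right: assumes "M \<in> carrier_mat d d" "\<And>x. x \<in> S \<Longrightarrow> F x \<in> carrier_mat d d"
  shows "msum d F S * M = msum d (\<lambda>x. F x * M) S"
proof -
  have Fd: "dim_row (F x) = d" "dim_col (F x) = d" if "x \<in> S" for x using assms(2)[OF that] by auto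
  have Md: "dim_row M = d" "dim_col M = d" using assms(1) by auto
  show ?thesis
  proof (rule eq_matI)
  fix i j assume ij: "i < dim_row (msum d (\<lambda>x. F x * M) S)" "j < dim_col (msum d (\<lambda>x. F x * M) S)"
  have "(msum d F S * M) $$ (i,j) = (\<Sum>k<d. (\<Sum>x\<in>S. F x $$ (i,k)) * M $$ (k,j))"
    using ij Fd Md by (auto simp: scalar_prod_def atLeast0LessThan intro!: sum.cong)
  also have "\<dots> = (\<Sum>x\<in>S. \<Sum>k<d. F x $$ (i,k) * M $$ (k,j))"
    by (simp add: sum_distrib_right sum.swap[of _ S])
  also have "\<dots> = msum d (\<lambda>x. F x * M) S $$ (i,j)"
    using ij Fd Md by (auto simp: scalar_prod_def atLeast0LessThan intro!: sum.cong)
  finally show "(msum d F S * M) $$ (i,j) = msum d (\<lambda>x. F x * M) S $$ (i,j)" .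
qed (use Fd Md in auto)
qed

lemma msum_adj: assumes "\<And>x. x \<in> S \<Longrightarrow> F x \<in> carrier_mat d d"
  shows "mat_adjoint (msum d F S) = msum d (\<lambda>x. mat_adjoint (F x)) S"
proof -
  have Fd: "dim_row (F x) = d" "dim_col (F x) = d" if "x \<in> S" for x using assms[OF that] by auto
  show ?thesis by (rule eq_matI) (auto simp: Fd intro!: sum.cong)
qed

lemma msum_smult: assumes "\<And>x. x \<in> S \<Longrightarrow> F x \<in> carrier_mat d d"
  shows "c \<cdot>\<^sub>m msum d F S = msum d (\<lambda>x. c \<cdot>\<^sub>m F x) S"
proof -
  have Fd: "dim_row (F x) = d" "dim_col (F x) = d" if "x \<in> S" for x using assms[OF that] by auto
  show ?thesis by (rule eq_matI) (auto simp: Fd sum_distrib_left intro!: sum.cong)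
qed

lemma mtrace_msum: assumes "\<And>x. x \<in> S \<Longrightarrow> F x \<in> carrier_mat d d"
  shows "mtrace (msum d F S) = (\<Sum>x\<in>S. mtrace (F x))"
proof -
  have Fd: "dim_row (F x) = d" "dim_col (F x) = d" if "x \<in> S" for x using assms[OF that] by auto
  show ?thesis by (auto simp: mtrace_def sum.swap[of _ S] Fd intro!: sum.cong)
qed

lemma msum_cong: "(\<And>x. x \<in> S \<Longrightarrow> F x = G x) \<Longrightarrow> msum d F S = msum d G S"
  by (auto simp: msum_def intro!: sum.cong)

lemma mexp_carrier[simp]: "A \<in> carrier_mat d d \<Longrightarrow> mexp A \<in> carrier_mat d d"
  unfolding mexp_def carrier_mat_def by simp

lemma mexp_index: "A \<in> carrier_mat d d \<Longrightarrow> i < d \<Longrightarrow> j < d \<Longrightarrow>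
   mexp A $$ (i,j) = (\<Sum>k. (A ^\<^sub>m k) $$ (i, j) / of_nat (fact k))"
  unfolding mexp_def carrier_mat_def by simp

lemma pow_carrier[simp]: "A \<in> carrier_mat d d \<Longrightarrow> A ^\<^sub>m k \<in> carrier_mat d d"
  unfolding carrier_mat_def by simp

lemma pow_bound: assumes A: "A \<in> carrier_mat d d"
  shows "i < d \<Longrightarrow> j < d \<Longrightarrow> cmod ((A ^\<^sub>m k) $$ (i,j)) \<le> (\<Sum>l<d. \<Sum>j<d. cmod (A $$ (l,j))) ^ k"
proof (induction k arbitrary: i j)
  case 0
  then show ?case using A by auto
next
  case (Suc k)
  define M where "M = (\<Sum>l<d. \<Sum>j<d. cmod (A $$ (l,j)))"
  have M0: "M \<ge> 0" unfolding M_def by (intro sum_nonneg) auto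
  have "(A ^\<^sub>m Suc k) $$ (i,j) = (\<Sum>l<d. (A ^\<^sub>m k) $$ (i,l) * A $$ (l,j))"
    using Suc.prems A by (auto simp: scalar_prod_def atLeast0LessThan intro!: sum.cong)
  hence "cmod ((A ^\<^sub>m Suc k) $$ (i,j)) \<le> (\<Sum>l<d. cmod ((A ^\<^sub>m k) $$ (i,l)) * cmod (A $$ (l,j)))"
    by (auto intro!: order.trans[OF norm_sum] simp: norm_mult)
  also have "\<dots> \<le> (\<Sum>l<d. M ^ k * cmod (A $$ (l,j)))"
    using Suc.IH Suc.prems by (intro sum_mono mult_right_mono) (auto simp: M_def)
  also have "\<dots> = M ^ k * (\<Sum>l<d. cmod (A $$ (l,j)))" by (simp add: sum_distrib_left)
  also have "\<dots> \<le> M ^ k * M"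
  proof (intro mult_left_mono)
    show "(\<Sum>l<d. cmod (A $$ (l,j))) \<le> M" unfolding M_def
      using Suc.prems by (intro sum_mono) (auto intro: member_le_sum[where f = "\<lambda>j. cmod (A $$ (_,j))"])
  qed (use M0 in auto)
  finally show ?case by (simp add: M_def mult.commute)
qed

lemma mexp_summable: fixes A :: "complex mat" assumes A: "A \<in> carrier_mat d d" and ij: "i < d" "j < d"
  shows "summable (\<lambda>k. (A ^\<^sub>m k) $$ (i, j) / of_nat (fact k))"
proof (rule summable_comparison_test')
  define M where "M = (\<Sum>l<d. \<Sum>j<d. cmod (A $$ (l,j)))"
  show "summable (\<lambda>k. M ^ k / fact k)"
    using summable_exp_generic[of M] by (simp add: divide_inverse_commute)
  fix k :: nat
  show "norm ((A ^\<^sub>m k) $$ (i, j) / of_nat (fact k)) \<le> M ^ k / fact k"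
    using pow_bound[OF A ij, of k] by (simp add: norm_divide M_def divide_right_mono)
qed

lemma pow_commute: assumes A: "A \<in> carrier_mat d d" and B: "B \<in> carrier_mat d d" and AB: "A * B = B * A"
  shows "A ^\<^sub>m k * B = B * A ^\<^sub>m k"
proof (induction k)
  case 0 then show ?case using A B by simp
next
  case (Suc k)
  have P: "A ^\<^sub>m k \<in> carrier_mat d d" using A by simp
  have "A ^\<^sub>m Suc k * B = A ^\<^sub>m k * A * B" by simp
  also have "\<dots> = A ^\<^sub>m k * (A * B)" by (rule assoc_mult_mat[OF P A B])
  also have "\<dots> = (A ^\<^sub>m k * B) * A" unfolding AB by (rule assoc_mult_mat[OF P B A, symmetric])
  also have "\<dots> = B * (A ^\<^sub>m k * A)" unfolding Suc.IH by (rule assoc_mult_mat[OF B P A])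
  also have "\<dots> = B * A ^\<^sub>m Suc k" by simp
  finally show ?case .
qed

lemma mexp_commute: assumes A: "A \<in> carrier_mat d d" and B: "B \<in> carrier_mat d d" and AB: "A * B = B * A"
  shows "mexp A * B = B * mexp A"
proof -
  have Md: "dim_row (mexp A) = d" "dim_col (mexp A) = d" using mexp_carrier[OF A] by auto
  have Ad: "dim_row A = d" "dim_col A = d" using A Md by auto
  show ?thesis
  proof (rule eq_matI)
  fix i j assume "i < dim_row (B * mexp A)" "j < dim_col (B * mexp A)"
  hence ij: "i < d" "j < d" using A B Md by auto
  have "(mexp A * B) $$ (i,j) = (\<Sum>l<d. (\<Sum>k. (A ^\<^sub>m k) $$ (i, l) / of_nat (fact k)) * B $$ (l,j))"
    using ij A B Md Ad by (auto simp: scalar_prod_def atLeast0LessThan mexp_index intro!: sum.cong)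
  also have "\<dots> = (\<Sum>l<d. \<Sum>k. (A ^\<^sub>m k) $$ (i, l) / of_nat (fact k) * B $$ (l,j))"
    using mexp_summable[OF A] ij by (intro sum.cong refl suminf_mult2) auto
  also have "\<dots> = (\<Sum>k. \<Sum>l<d. (A ^\<^sub>m k) $$ (i, l) / of_nat (fact k) * B $$ (l,j))"
    using mexp_summable[OF A] ij by (intro suminf_sum[symmetric] summable_mult2) auto
  also have "\<dots> = (\<Sum>k. (A ^\<^sub>m k * B) $$ (i,j) / of_nat (fact k))"
    using ij A B by (intro suminf_cong) (auto simp: scalar_prod_def atLeast0LessThan sum_divide_distrib intro!: sum.cong)
  also have "\<dots> = (\<Sum>k. (B * A ^\<^sub>m k) $$ (i,j) / of_nat (fact k))"
    using pow_commute[OF A B AB] by simp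
  also have "\<dots> = (\<Sum>k. \<Sum>l<d. B $$ (i,l) * ((A ^\<^sub>m k) $$ (l, j) / of_nat (fact k)))"
    using ij A B by (intro suminf_cong) (auto simp: scalar_prod_def atLeast0LessThan sum_divide_distrib intro!: sum.cong)
  also have "\<dots> = (\<Sum>l<d. \<Sum>k. B $$ (i,l) * ((A ^\<^sub>m k) $$ (l, j) / of_nat (fact k)))"
    using mexp_summable[OF A] ij by (intro suminf_sum summable_mult) auto
  also have "\<dots> = (\<Sum>l<d. B $$ (i,l) * (\<Sum>k. (A ^\<^sub>m k) $$ (l, j) / of_nat (fact k)))"
    using mexp_summable[OF A] ij by (intro sum.cong refl suminf_mult) auto
  also have "\<dots> = (B * mexp A) $$ (i,j)"
    using ij A B Md Ad by (auto simp: scalar_prod_def atLeast0LessThan mexp_index intro!: sum.cong)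
  finally show "(mexp A * B) $$ (i,j) = (B * mexp A) $$ (i,j)" .
qed (insert Md Ad A B, auto)
qed

lemma pow_adj: fixes A :: "complex mat" assumes A: "A \<in> carrier_mat d d"
  shows "mat_adjoint A ^\<^sub>m k = mat_adjoint (A ^\<^sub>m k)"
proof (induction k)
  case 0 then show ?case using A by simp
next
  case (Suc k)
  have P: "A ^\<^sub>m k \<in> carrier_mat d d" using A by simp
  have "mat_adjoint A ^\<^sub>m Suc k = mat_adjoint (A ^\<^sub>m k) * mat_adjoint A" using Suc.IH by simp
  also have "\<dots> = mat_adjoint (A * A ^\<^sub>m k)" using adj_mult[OF A P] by simp
  also have "\<dots> = mat_adjoint (A ^\<^sub>m Suc k)" using pow_commute[OF A A refl, of k] by simp
  finally show ?case .
qed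

lemma mexp_adj: fixes A :: "complex mat" assumes A: "A \<in> carrier_mat d d"
  shows "mexp (mat_adjoint A) = mat_adjoint (mexp A)"
proof -
  have Md: "dim_row (mexp A) = d" "dim_col (mexp A) = d" using mexp_carrier[OF A] by auto
  have Ad: "dim_row A = d" "dim_col A = d" using A Md by auto
  have Md2: "dim_row (mexp (mat_adjoint A)) = d" "dim_col (mexp (mat_adjoint A)) = d"
    using mexp_carrier[OF adj_carrier[OF A]] by auto
  show ?thesis
  proof (rule eq_matI)
  fix i j assume "i < dim_row (mat_adjoint (mexp A))" "j < dim_col (mat_adjoint (mexp A))"
  hence ij: "i < d" "j < d" using A Md by auto
  have "mat_adjoint (mexp A) $$ (i,j) = cnj (\<Sum>k. (A ^\<^sub>m k) $$ (j, i) / of_nat (fact k))"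
    using A ij Md Ad by (simp add: mexp_index)
  also have "\<dots> = (\<Sum>k. cnj ((A ^\<^sub>m k) $$ (j, i) / of_nat (fact k)))"
    by (rule sums_unique[OF sums_cnj[THEN iffD2, OF summable_sums[OF mexp_summable[OF A ij(2) ij(1)]]]])
  also have "\<dots> = (\<Sum>k. (mat_adjoint A ^\<^sub>m k) $$ (i, j) / of_nat (fact k))"
    using A ij Md Ad by (simp add: pow_adj[OF A])
  also have "\<dots> = mexp (mat_adjoint A) $$ (i,j)"
    using mexp_index[OF adj_carrier[OF A] ij] by simp
  finally show "mexp (mat_adjoint A) $$ (i,j) = mat_adjoint (mexp A) $$ (i,j)" ..
qed (insert Md Ad Md2, auto)
qed




lemma unitary_completion:
  fixes v :: "complex vec"
  assumes v: "v \<in> carrier_vec n" and v0: "v \<noteq> 0\<^sub>v n"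
  shows "\<exists>W c. W \<in> carrier_mat n n \<and> mat_adjoint W * W = 1\<^sub>m n \<and> W * mat_adjoint W = 1\<^sub>m n \<and> col W 0 = c \<cdot>\<^sub>v v"
proof -
  interpret cof_vec_space n "TYPE(complex)" .
  have n: "n \<noteq> 0" using v v0 by auto
  define b where "b = basis_completion v"
  from basis_completion[OF v v0, folded b_def]
  have dist_b: "distinct b" and indep: "\<not> lin_dep (set b)" and b: "set b \<subseteq> carrier_vec n" and hdb: "hd b = v"
    and len_b: "length b = n" by auto
  from hdb len_b n obtain vs where bv: "b = v # vs" by (cases b, auto)
  define ws where "ws = gram_schmidt n b"
  from gram_schmidt_result[OF b dist_b indep refl, folded ws_def]
  have ws: "set ws \<subseteq> carrier_vec n" "corthogonal ws" "length ws = n"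
    by (auto simp: len_b)
  from gram_schmidt_hd[OF v, of vs, folded bv] have hdws: "hd ws = v" unfolding ws_def .
  have ws0: "ws ! 0 = v" using hdws ws(3) n by (cases ws) auto
  have wsc: "\<And>j. j < n \<Longrightarrow> ws ! j \<in> carrier_vec n" using ws by auto
  define sq where "sq j = (\<Sum>l<n. (cmod (ws ! j $ l))\<^sup>2)" for j
  define nr where "nr j = complex_of_real (sqrt (sq j))" for j
  have inner: "(\<Sum>l<n. cnj (ws ! i $ l) * ws ! j $ l) = ws ! j \<bullet>c ws ! i" if "i < n" "j < n" for i j
    using wsc[OF that(1)] wsc[OF that(2)] by (auto simp: scalar_prod_def atLeast0LessThan intro!: sum.cong)
  have self: "(\<Sum>l<n. cnj (ws ! i $ l) * ws ! i $ l) = complex_of_real (sq i)" for i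
    unfolding sq_def of_real_sum by (intro sum.cong refl) (metis complex_norm_square mult.commute)
  have sq_pos: "sq j > 0" if "j < n" for j
  proof -
    have "ws ! j \<bullet>c ws ! j \<noteq> 0" using ws(2) that ws(3) unfolding corthogonal_def by auto
    hence "sq j \<noteq> 0" using self[of j] inner[OF that that] by auto
    moreover have "sq j \<ge> 0" unfolding sq_def by (intro sum_nonneg) auto
    ultimately show ?thesis by auto
  qed
  have nr_nz: "nr j \<noteq> 0" if "j < n" for j using sq_pos[OF that] by (auto simp: nr_def)
  have nr_sq: "nr j * nr j = complex_of_real (sq j)" if "j < n" for j
    using sq_pos[OF that] by (simp add: nr_def flip: of_real_mult)
  have cnj_nr: "cnj (nr j) = nr j" for j by (simp add: nr_def)
  define W where "W = mat n n (\<lambda>(i,j). ws ! j $ i / nr j)"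
  have W: "W \<in> carrier_mat n n" by (simp add: W_def)
  have WW: "mat_adjoint W * W = 1\<^sub>m n"
  proof (rule eq_matI)
    fix i j assume ij: "i < dim_row (1\<^sub>m n)" "j < dim_col (1\<^sub>m n)"
    hence i: "i < n" and j: "j < n" by auto
    have "(mat_adjoint W * W) $$ (i,j) = (\<Sum>l<n. cnj (ws ! i $ l / nr i) * (ws ! j $ l / nr j))"
      using i j W by (auto simp: scalar_prod_def atLeast0LessThan W_def intro!: sum.cong)
    also have "\<dots> = (\<Sum>l<n. cnj (ws ! i $ l) * ws ! j $ l) / (nr i * nr j)"
      by (simp add: cnj_nr sum_divide_distrib)
    also have "\<dots> = 1\<^sub>m n $$ (i,j)"
    proof (cases "i = j")
      case True
      then show ?thesis using self[of i] nr_sq[OF i] i sq_pos[OF i] by simp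
    next
      case False
      have "ws ! j \<bullet>c ws ! i = 0" using ws(2) ws(3) i j False unfolding corthogonal_def by auto
      then show ?thesis using inner[OF i j] False i j by simp
    qed
    finally show "(mat_adjoint W * W) $$ (i,j) = 1\<^sub>m n $$ (i,j)" .
  qed (insert W, auto)
  have WW': "W * mat_adjoint W = 1\<^sub>m n"
    using mat_mult_left_right_inverse[OF adj_carrier[OF W] W WW] by simp
  have "col W 0 = (1 / nr 0) \<cdot>\<^sub>v v"
    using n v ws0 by (intro eq_vecI) (auto simp: W_def)
  thus ?thesis using W WW WW' by blast
qed

lemma dmat_carrier[simp]: "dmat xs \<in> carrier_mat (length xs) (length xs)"
  by (simp add: dmat_def)

lemma dmat_index[simp]: "i < length xs \<Longrightarrow> j < length xs \<Longrightarrow> dmat xs $$ (i,j) = (if i = j then xs ! i else 0)"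
  by (simp add: dmat_def)

lemma dmat_dim[simp]: "dim_row (dmat xs) = length xs" "dim_col (dmat xs) = length xs"
  by (simp_all add: dmat_def)

lemma adj_four_block: fixes A :: "complex mat" assumes "A \<in> carrier_mat n1 m1" "B \<in> carrier_mat n1 m2" "C \<in> carrier_mat n2 m1" "D \<in> carrier_mat n2 m2"
  shows "mat_adjoint (four_block_mat A B C D) = four_block_mat (mat_adjoint A) (mat_adjoint C) (mat_adjoint B) (mat_adjoint D)"
proof -
  have d: "dim_row A = n1" "dim_col A = m1" "dim_row B = n1" "dim_col B = m2" "dim_row C = n2"
    "dim_col C = m1" "dim_row D = n2" "dim_col D = m2" using assms by auto
  show ?thesis by (rule eq_matI) (auto simp: d)
qed

lemma spectral:
  fixes A :: "complex mat"
  assumes "A \<in> carrier_mat n n" "mat_adjoint A = A"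
  shows "\<exists>U lam. U \<in> carrier_mat n n \<and> U * mat_adjoint U = 1\<^sub>m n \<and> mat_adjoint U * U = 1\<^sub>m n \<and>
     length lam = n \<and> A = U * dmat (map complex_of_real lam) * mat_adjoint U"
  using assms
proof (induction n arbitrary: A)
  case 0
  show ?case
    by (rule exI[of _ "1\<^sub>m 0"], rule exI[of _ "[]"]) (insert 0, auto)
next
  case (Suc k)
  note A = Suc.prems(1) and Ah = Suc.prems(2)
  note as = assoc_mult_mat[of _ "Suc k" "Suc k" _ "Suc k" _ "Suc k"]
  note mc = mult_carrier_mat[of _ "Suc k" "Suc k" _ "Suc k"]
  note am = adj_mult[of _ "Suc k" "Suc k" _ "Suc k"]
  note cm = col_mult2[of _ "Suc k" "Suc k" _ "Suc k"]
  have "degree (char_poly A) = Suc k" using degree_monic_char_poly[OF A] by simp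
  then obtain e where "poly (char_poly A) e = 0"
    using fundamental_theorem_of_algebra constant_degree by (metis nat.distinct(1))
  hence "eigenvalue A e" using eigenvalue_root_char_poly[OF A] by simp
  then obtain v where "eigenvector A v e" by (auto simp: eigenvalue_def)
  hence v: "v \<in> carrier_vec (Suc k)" "v \<noteq> 0\<^sub>v (Suc k)" "A *\<^sub>v v = e \<cdot>\<^sub>v v"
    using A by (auto simp: eigenvector_def)
  obtain W c where W: "W \<in> carrier_mat (Suc k) (Suc k)" and WW: "mat_adjoint W * W = 1\<^sub>m (Suc k)"
    and WW': "W * mat_adjoint W = 1\<^sub>m (Suc k)" and Wc: "col W 0 = c \<cdot>\<^sub>v v"
    using unitary_completion[OF v(1,2)] by blast
  have Wa: "mat_adjoint W \<in> carrier_mat (Suc k) (Suc k)" using adj_carrier[OF W] by simp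
  have Wd[simp]: "dim_row W = Suc k" "dim_col W = Suc k" "dim_row (mat_adjoint W) = Suc k" "dim_col (mat_adjoint W) = Suc k"
    using W by auto
  have Ad[simp]: "dim_row A = Suc k" "dim_col A = Suc k" using A by auto
  define B where "B = mat_adjoint W * A * W"
  have B: "B \<in> carrier_mat (Suc k) (Suc k)" using W A Wa by (simp add: B_def mc)
  have Bh: "mat_adjoint B = B"
  proof -
    have "mat_adjoint B = mat_adjoint W * mat_adjoint (mat_adjoint W * A)"
      unfolding B_def using W A Wa by (simp add: am mc)
    also have "\<dots> = mat_adjoint W * (mat_adjoint A * W)"
      using W A Wa by (simp add: am mc)
    also have "\<dots> = B" unfolding B_def using Ah W A Wa by (simp add: as)
    finally show ?thesis .
  qed
  have cW: "col W 0 \<in> carrier_vec (Suc k)" unfolding carrier_vec_def by simp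
  have colB: "col B 0 = e \<cdot>\<^sub>v unit_vec (Suc k) 0"
  proof -
    have "B = mat_adjoint W * (A * W)" unfolding B_def by (rule assoc_mult_mat[OF Wa A W])
    hence "col B 0 = mat_adjoint W *\<^sub>v col (A * W) 0" using col_mult2[OF Wa mc[OF A W], of 0] by simp
    also have "col (A * W) 0 = A *\<^sub>v col W 0" using col_mult2[OF A W, of 0] by simp
    also have "A *\<^sub>v col W 0 = e \<cdot>\<^sub>v col W 0"
      unfolding Wc using v A by (simp add: mult_mat_vec smult_smult_assoc mult.commute)
    also have "mat_adjoint W *\<^sub>v (e \<cdot>\<^sub>v col W 0) = e \<cdot>\<^sub>v (mat_adjoint W *\<^sub>v col W 0)"
      by (rule mult_mat_vec[OF Wa cW])
    also have "mat_adjoint W *\<^sub>v col W 0 = col (mat_adjoint W * W) 0"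
      using W Wa by (simp add: cm)
    finally show ?thesis using WW by simp
  qed
  have Bi0: "B $$ (i, 0) = (if i = 0 then e else 0)" if "i < Suc k" for i
    using arg_cong[OF colB, of "\<lambda>x. x $ i"] that B by auto
  have B0j: "B $$ (0, j) = 0" if "j < Suc k" "j \<noteq> 0" for j
  proof -
    have "B $$ (0, j) = mat_adjoint B $$ (0, j)" using Bh by simp
    also have "\<dots> = cnj (B $$ (j, 0))" using B that by simp
    finally show ?thesis using Bi0[OF that(1)] that by simp
  qed
  have ereal: "e = complex_of_real (Re e)"
  proof -
    have "B $$ (0, 0) = mat_adjoint B $$ (0, 0)" using Bh by simp
    also have "\<dots> = cnj (B $$ (0, 0))" using B by simp
    finally have "e = cnj e" using Bi0[of 0] by simp
    hence "Im e = 0" by (metis complex_cnj_cnj cnj.simps(2) complex.sel(2) neg_equal_zero)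
    thus ?thesis by (simp add: complex_eq_iff)
  qed
  define B3 where "B3 = mat k k (\<lambda>(i,j). B $$ (Suc i, Suc j))"
  have B3: "B3 \<in> carrier_mat k k" by (simp add: B3_def)
  have B3h: "mat_adjoint B3 = B3"
  proof (rule eq_matI)
    fix i j assume "i < dim_row B3" "j < dim_col B3"
    hence ij: "i < k" "j < k" by (auto simp: B3_def)
    have "mat_adjoint B3 $$ (i,j) = cnj (B $$ (Suc j, Suc i))" using ij by (simp add: B3_def)
    also have "\<dots> = mat_adjoint B $$ (Suc i, Suc j)" using ij B by simp
    also have "\<dots> = B3 $$ (i,j)" using ij Bh by (simp add: B3_def)
    finally show "mat_adjoint B3 $$ (i,j) = B3 $$ (i,j)" .
  qed (auto simp: B3_def)
  obtain U3 lam3 where U3: "U3 \<in> carrier_mat k k" and U3U3: "U3 * mat_adjoint U3 = 1\<^sub>m k"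
    and U3U3': "mat_adjoint U3 * U3 = 1\<^sub>m k" and lam3: "length lam3 = k"
    and B3eq: "B3 = U3 * dmat (map complex_of_real lam3) * mat_adjoint U3"
    using Suc.IH[OF B3 B3h] by blast
  define D3 where "D3 = dmat (map complex_of_real lam3)"
  have D3: "D3 \<in> carrier_mat k k" using dmat_carrier[of "map complex_of_real lam3"] lam3 by (simp add: D3_def)
  define E1 where "E1 = mat 1 1 (\<lambda>_. e)"
  have E1: "E1 \<in> carrier_mat 1 1" by (simp add: E1_def)
  have U3a: "mat_adjoint U3 \<in> carrier_mat k k" using adj_carrier[OF U3] by simp
  define V where "V = four_block_mat (1\<^sub>m 1) (0\<^sub>m 1 k) (0\<^sub>m k 1) U3"
  have V: "V \<in> carrier_mat (Suc k) (Suc k)"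
    using four_block_carrier_mat[OF one_carrier_mat[of 1] U3, of "0\<^sub>m 1 k" "0\<^sub>m k 1"] by (simp add: V_def)
  have Va: "mat_adjoint V = four_block_mat (1\<^sub>m 1) (0\<^sub>m 1 k) (0\<^sub>m k 1) (mat_adjoint U3)"
    unfolding V_def using U3 by (subst adj_four_block) auto
  have Va': "mat_adjoint V \<in> carrier_mat (Suc k) (Suc k)" using adj_carrier[OF V] by simp
  define D where "D = dmat (map complex_of_real (Re e # lam3))"
  have Deq: "D = four_block_mat E1 (0\<^sub>m 1 k) (0\<^sub>m k 1) D3"
    by (rule eq_matI) (auto simp: D_def E1_def D3_def lam3 ereal[symmetric] nth_Cons')
  have D: "D \<in> carrier_mat (Suc k) (Suc k)" using dmat_carrier[of "map complex_of_real (Re e # lam3)"] lam3 by (simp add: D_def)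
  have Beq: "B = four_block_mat E1 (0\<^sub>m 1 k) (0\<^sub>m k 1) B3"
  proof (rule eq_matI)
    fix i j assume "i < dim_row (four_block_mat E1 (0\<^sub>m 1 k) (0\<^sub>m k 1) B3)"
      "j < dim_col (four_block_mat E1 (0\<^sub>m 1 k) (0\<^sub>m k 1) B3)"
    hence ij: "i < Suc k" "j < Suc k" using E1 B3 by auto
    show "B $$ (i,j) = four_block_mat E1 (0\<^sub>m 1 k) (0\<^sub>m k 1) B3 $$ (i,j)"
      using ij Bi0 B0j E1 B3 by (cases i; cases j) (auto simp: E1_def B3_def)
  qed (insert B E1 B3, auto)
  have VD: "V * D * mat_adjoint V = B"
  proof -
    have "V * D = four_block_mat E1 (0\<^sub>m 1 k) (0\<^sub>m k 1) (U3 * D3)"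
      unfolding V_def Deq using U3 D3 E1
      by (subst mult_four_block_mat[of _ 1 1 _ k _ k _ _ 1 _ k]) auto
    hence "V * D * mat_adjoint V = four_block_mat E1 (0\<^sub>m 1 k) (0\<^sub>m k 1) (U3 * D3 * mat_adjoint U3)"
      unfolding Va using U3 D3 E1 U3a
      by (simp, subst mult_four_block_mat[of _ 1 1 _ k _ k _ _ 1 _ k]) auto
    thus ?thesis using Beq B3eq D3_def by simp
  qed
  have VV: "V * mat_adjoint V = 1\<^sub>m (Suc k)"
  proof -
    have "V * mat_adjoint V = four_block_mat (1\<^sub>m 1) (0\<^sub>m 1 k) (0\<^sub>m k 1) (U3 * mat_adjoint U3)"
      unfolding Va unfolding V_def using U3 U3a
      by (subst mult_four_block_mat[of _ 1 1 _ k _ k _ _ 1 _ k]) auto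
    thus ?thesis using U3U3 by simp
  qed
  have VV': "mat_adjoint V * V = 1\<^sub>m (Suc k)"
  proof -
    have "mat_adjoint V * V = four_block_mat (1\<^sub>m 1) (0\<^sub>m 1 k) (0\<^sub>m k 1) (mat_adjoint U3 * U3)"
      unfolding Va unfolding V_def using U3 U3a
      by (subst mult_four_block_mat[of _ 1 1 _ k _ k _ _ 1 _ k]) auto
    thus ?thesis using U3U3' by simp
  qed
  define U where "U = W * V"
  have U: "U \<in> carrier_mat (Suc k) (Suc k)" using W V by (simp add: U_def mc)
  have Ua: "mat_adjoint U = mat_adjoint V * mat_adjoint W" unfolding U_def using adj_mult[OF W V] by simp
  have "U * mat_adjoint U = W * (V * mat_adjoint V) * mat_adjoint W"
    unfolding Ua unfolding U_def using W V Va' Wa by (simp add: as mc)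
  hence UU: "U * mat_adjoint U = 1\<^sub>m (Suc k)" using VV WW' W Wa by simp
  have "mat_adjoint U * U = mat_adjoint V * (mat_adjoint W * W) * V"
    unfolding Ua unfolding U_def using W V Va' Wa by (simp add: as mc)
  hence UU': "mat_adjoint U * U = 1\<^sub>m (Suc k)" using VV' WW V Va' by simp
  have "U * D * mat_adjoint U = W * (V * D * mat_adjoint V) * mat_adjoint W"
    unfolding Ua unfolding U_def using W V Va' Wa D by (simp add: as mc)
  also have "\<dots> = (W * mat_adjoint W) * A * (W * mat_adjoint W)"
    unfolding VD B_def using W Wa A by (simp add: as mc)
  also have "\<dots> = A" using WW' A by simp
  finally have "A = U * D * mat_adjoint U" ..
  thus ?case using U UU UU' lam3 unfolding D_def
    by (intro exI[of _ U] exI[of _ "Re e # lam3"]) auto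
qed




lemma dmat_mult_right: assumes M: "M \<in> carrier_mat d d" and xs: "length xs = d" and ij: "i < d" "j < d"
  shows "(M * dmat xs) $$ (i,j) = M $$ (i,j) * xs ! j"
proof -
  have Md: "dim_row M = d" "dim_col M = d" using M by auto
  have "(M * dmat xs) $$ (i,j) = (\<Sum>k\<in>{0..<d}. M $$ (i,k) * dmat xs $$ (k,j))"
    using Md xs ij by (simp add: scalar_prod_def)
  also have "\<dots> = (\<Sum>k\<in>{0..<d}. if k = j then M $$ (i,k) * xs ! k else 0)"
    using xs ij by (intro sum.cong) auto
  also have "\<dots> = M $$ (i,j) * xs ! j" using ij by simp
  finally show ?thesis .
qed

lemma dmat_mult_left: assumes M: "M \<in> carrier_mat d d" and xs: "length xs = d" and ij: "i < d" "j < d"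
  shows "(dmat xs * M) $$ (i,j) = xs ! i * M $$ (i,j)"
proof -
  have Md: "dim_row M = d" "dim_col M = d" using M by auto
  have "(dmat xs * M) $$ (i,j) = (\<Sum>k\<in>{0..<d}. dmat xs $$ (i,k) * M $$ (k,j))"
    using Md xs ij by (simp add: scalar_prod_def)
  also have "\<dots> = (\<Sum>k\<in>{0..<d}. if k = i then xs ! k * M $$ (k,j) else 0)"
    using xs ij by (intro sum.cong) auto
  also have "\<dots> = xs ! i * M $$ (i,j)" using ij by simp
  finally show ?thesis .
qed

lemma herm_fun_commute:
  fixes A B :: "complex mat"
  assumes A: "A \<in> carrier_mat d d" and Ah: "mat_adjoint A = A" and B: "B \<in> carrier_mat d d"
    and AB: "A * B = B * A"
  shows "herm_fun f A \<in> carrier_mat d d \<and> herm_fun f A * B = B * herm_fun f A"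
proof -
  note as = assoc_mult_mat[of _ d d _ d _ d]
  note mc = mult_carrier_mat[of _ d d _ d]
  have Ad: "dim_row A = d" using A by auto
  let ?P = "\<lambda>M. \<exists>U lam. unitary U \<and> dim_row U = dim_row A \<and> length lam = dim_row A \<and>
       A = U * dmat (map complex_of_real lam) * mat_adjoint U \<and>
       M = U * dmat (map f lam) * mat_adjoint U"
  obtain U0 lam0 where U0: "U0 \<in> carrier_mat d d" "U0 * mat_adjoint U0 = 1\<^sub>m d" "mat_adjoint U0 * U0 = 1\<^sub>m d"
    "length lam0 = d" "A = U0 * dmat (map complex_of_real lam0) * mat_adjoint U0"
    using spectral[OF A Ah] by blast
  have "?P (U0 * dmat (map f lam0) * mat_adjoint U0)"
    using U0 Ad unfolding unitary_def by (intro exI[of _ U0] exI[of _ lam0]) auto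
  hence "?P (herm_fun f A)" unfolding herm_fun_def by (rule someI)
  then obtain U lam where Uu: "unitary U" and Ud: "dim_row U = d" and lam: "length lam = d"
    and Aeq: "A = U * dmat (map complex_of_real lam) * mat_adjoint U"
    and Feq: "herm_fun f A = U * dmat (map f lam) * mat_adjoint U"
    using Ad by blast
  have U: "U \<in> carrier_mat d d" and UU: "U * mat_adjoint U = 1\<^sub>m d" and UU': "mat_adjoint U * U = 1\<^sub>m d"
    using Uu Ud unfolding unitary_def by auto
  have Ua: "mat_adjoint U \<in> carrier_mat d d" using adj_carrier[OF U] .
  have UZ1: "mat_adjoint U * (U * Z) = Z" if "Z \<in> carrier_mat d d" for Z
    using assoc_mult_mat[OF Ua U that, symmetric] UU' that by simp
  have UZ2: "U * (mat_adjoint U * Z) = Z" if "Z \<in> carrier_mat d d" for Z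
    using assoc_mult_mat[OF U Ua that, symmetric] UU that by simp
  define Dm where "Dm = dmat (map complex_of_real lam)"
  define F where "F = dmat (map f lam)"
  have Dm: "Dm \<in> carrier_mat d d" using dmat_carrier[of "map complex_of_real lam"] lam by (simp add: Dm_def)
  have F: "F \<in> carrier_mat d d" using dmat_carrier[of "map f lam"] lam by (simp add: F_def)
  define C where "C = mat_adjoint U * B * U"
  have C: "C \<in> carrier_mat d d" using Ua B U by (simp add: C_def mc)
  have UAU: "mat_adjoint U * A * U = Dm"
  proof -
    have "mat_adjoint U * A * U = (mat_adjoint U * U) * Dm * (mat_adjoint U * U)"
      unfolding Aeq Dm_def[symmetric] using U Ua Dm by (simp add: as mc UZ1 UZ2)
    thus ?thesis using UU' Dm by simp
  qed
  have CD: "C * Dm = Dm * C"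
  proof -
    have "C * Dm = mat_adjoint U * B * (U * mat_adjoint U) * A * U"
      unfolding C_def UAU[symmetric] using U Ua A B by (simp add: as mc UZ1 UZ2)
    also have "\<dots> = mat_adjoint U * (B * A) * U" using UU U Ua A B by (simp add: as mc UZ1 UZ2)
    also have "\<dots> = mat_adjoint U * (A * B) * U" using AB by simp
    also have "\<dots> = mat_adjoint U * A * (U * mat_adjoint U) * B * U" using UU U Ua A B by (simp add: as mc UZ1 UZ2)
    also have "\<dots> = Dm * C" unfolding C_def UAU[symmetric] using U Ua A B by (simp add: as mc UZ1 UZ2)
    finally show ?thesis .
  qed
  have CF: "C * F = F * C"
  proof (rule eq_matI)
    fix i j assume "i < dim_row (F * C)" "j < dim_col (F * C)"
    hence ij: "i < d" "j < d" using F C by auto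
    have e: "C $$ (i,j) * complex_of_real (lam ! j) = complex_of_real (lam ! i) * C $$ (i,j)"
      using arg_cong[OF CD, of "\<lambda>M. M $$ (i,j)"] dmat_mult_right[OF C _ ij, of "map complex_of_real lam"]
        dmat_mult_left[OF C _ ij, of "map complex_of_real lam"] lam ij by (simp add: Dm_def)
    have "C $$ (i,j) * f (lam ! j) = f (lam ! i) * C $$ (i,j)"
    proof (cases "lam ! i = lam ! j")
      case True then show ?thesis by simp
    next
      case False
      have "C $$ (i,j) * (complex_of_real (lam ! j) - complex_of_real (lam ! i)) = 0"
        using e by (simp add: algebra_simps)
      hence "C $$ (i,j) = 0" using False by simp
      then show ?thesis by simp
    qed
    thus "(C * F) $$ (i,j) = (F * C) $$ (i,j)"
      using dmat_mult_right[OF C _ ij, of "map f lam"] dmat_mult_left[OF C _ ij, of "map f lam"] lam ij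
      by (simp add: F_def)
  qed (insert C F, auto)
  have Beq: "B = U * C * mat_adjoint U"
  proof -
    have "U * C * mat_adjoint U = (U * mat_adjoint U) * B * (U * mat_adjoint U)"
      unfolding C_def using U Ua B by (simp add: as mc UZ1 UZ2)
    thus ?thesis using UU B by simp
  qed
  have "herm_fun f A * B = U * (F * C) * mat_adjoint U"
    unfolding Feq F_def[symmetric] using U Ua F C UU' by (subst Beq) (simp add: as mc UZ1 UZ2)
  also have "\<dots> = U * (C * F) * mat_adjoint U" using CF by simp
  also have "\<dots> = B * herm_fun f A"
    unfolding Feq F_def[symmetric] using U Ua F C UU' by (subst Beq) (simp add: as mc UZ1 UZ2)
  finally have "herm_fun f A * B = B * herm_fun f A" .
  moreover have "herm_fun f A \<in> carrier_mat d d" unfolding Feq F_def[symmetric] using U Ua F by (simp add: mc)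
  ultimately show ?thesis by blast
qed

definition Eu :: "nat \<Rightarrow> nat \<Rightarrow> nat \<Rightarrow> complex mat" where
  "Eu d a b = mat d d (\<lambda>(i,j). if i = a \<and> j = b then 1 else 0)"

lemma mtrace_unit: assumes M: "M \<in> carrier_mat d d" and ab: "a < d" "b < d"
  shows "mtrace (M * Eu d a b) = M $$ (b,a)"
proof -
  have Md: "dim_row M = d" "dim_col M = d" using M by auto
  have inner: "(M * Eu d a b) $$ (i,i) = (if i = b then M $$ (i,a) else 0)" if i: "i < d" for i
  proof -
    have "(M * Eu d a b) $$ (i,i) = (\<Sum>k\<in>{0..<d}. M $$ (i,k) * Eu d a b $$ (k,i))"
      using Md i by (simp add: scalar_prod_def Eu_def)
    also have "\<dots> = (\<Sum>k\<in>{0..<d}. if k = a then (if i = b then M $$ (i,k) else 0) else 0)"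
      using i by (intro sum.cong) (auto simp: Eu_def)
    also have "\<dots> = (if i = b then M $$ (i,a) else 0)" using ab by simp
    finally show ?thesis .
  qed
  have "mtrace (M * Eu d a b) = (\<Sum>i<d. if i = b then M $$ (i,a) else 0)"
    unfolding mtrace_def using Md inner by (intro sum.cong) auto
  also have "\<dots> = M $$ (b,a)" using ab by simp
  finally show ?thesis .
qed

lemma hs_adjoint_eq:
  assumes cl: "\<And>X. X \<in> carrier_mat d d \<Longrightarrow> T X \<in> carrier_mat d d"
    and sa: "\<And>X Y. X \<in> carrier_mat d d \<Longrightarrow> Y \<in> carrier_mat d d \<Longrightarrow>
       mtrace (mat_adjoint X * T Y) = mtrace (mat_adjoint (T X) * Y)"
    and X: "X \<in> carrier_mat d d"
  shows "hs_adjoint d T X = T X"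
proof -
  let ?Q = "\<lambda>S. (\<forall>X \<in> carrier_mat d d. S X \<in> carrier_mat d d) \<and>
      (\<forall>X \<in> carrier_mat d d. \<forall>Y \<in> carrier_mat d d.
          mtrace (mat_adjoint X * T Y) = mtrace (mat_adjoint (S X) * Y))"
  have "?Q T" using cl sa by blast
  hence Q: "?Q (hs_adjoint d T)" unfolding hs_adjoint_def by (rule someI[where P = "?Q"])
  define Z where "Z = hs_adjoint d T X"
  have Z: "Z \<in> carrier_mat d d" using Q X unfolding Z_def by blast
  have TX: "T X \<in> carrier_mat d d" using cl[OF X] .
  have eq: "mtrace (mat_adjoint Z * Y) = mtrace (mat_adjoint (T X) * Y)" if Y: "Y \<in> carrier_mat d d" for Y
  proof -
    have "mtrace (mat_adjoint X * T Y) = mtrace (mat_adjoint (hs_adjoint d T X) * Y)"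
      using Q X Y by blast
    thus ?thesis using sa[OF X Y] unfolding Z_def by simp
  qed
  have Za: "mat_adjoint Z \<in> carrier_mat d d" using adj_carrier[OF Z] .
  have TXa: "mat_adjoint (T X) \<in> carrier_mat d d" using adj_carrier[OF TX] .
  have Eu: "Eu d a b \<in> carrier_mat d d" for a b by (simp add: Eu_def)
  have "mat_adjoint Z = mat_adjoint (T X)"
  proof (rule eq_matI)
    fix i j assume "i < dim_row (mat_adjoint (T X))" "j < dim_col (mat_adjoint (T X))"
    hence ij: "i < d" "j < d" using TXa by auto
    show "mat_adjoint Z $$ (i,j) = mat_adjoint (T X) $$ (i,j)"
      using eq[OF Eu[of j i]] mtrace_unit[OF Za ij(2) ij(1)] mtrace_unit[OF TXa ij(2) ij(1)] by simp
  qed (use Z TX in auto)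
  hence "Z = T X" by (metis adj_adj)
  thus ?thesis unfolding Z_def .
qed

lemma per_j:
  fixes A' K P Q B :: "complex mat"
  assumes c: "A' \<in> carrier_mat d d" "K \<in> carrier_mat d d" "P \<in> carrier_mat d d" "Q \<in> carrier_mat d d" "B \<in> carrier_mat d d"
    and KP: "K * P = P * K" and KQ: "K * Q = Q * K"
  shows "mtrace (A' * P * (K * B * K) * Q) = mtrace (K * A' * K * P * B * Q)"
proof -
  note as = assoc_mult_mat[of _ d d _ d _ d]
  note mc = mult_carrier_mat[of _ d d _ d]
  have PKZ: "P * (K * Z) = K * (P * Z)" if "Z \<in> carrier_mat d d" for Z
    using assoc_mult_mat[OF c(3) c(2) that, symmetric] assoc_mult_mat[OF c(2) c(3) that] KP by simp
  have "A' * P * (K * B * K) * Q = (A' * K * P * B * Q) * K"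
    using c by (simp add: as mc PKZ KQ)
  hence "mtrace (A' * P * (K * B * K) * Q) = mtrace (K * (A' * K * P * B * Q))"
    using mtrace_comm[of "A' * K * P * B * Q" d d K] c by (simp add: mc)
  also have "\<dots> = mtrace (K * A' * K * P * B * Q)" using c by (simp add: as mc)
  finally show ?thesis .
qed

lemma db_general:
  fixes K :: "nat \<Rightarrow> complex mat" and c :: "nat \<Rightarrow> complex" and P Q A B :: "complex mat"
  assumes K: "\<And>j. j \<in> S \<Longrightarrow> K j \<in> carrier_mat d d" and Kh: "\<And>j. j \<in> S \<Longrightarrow> mat_adjoint (K j) = K j"
    and cr: "\<And>j. j \<in> S \<Longrightarrow> cnj (c j) = c j"
    and P: "P \<in> carrier_mat d d" and Q: "Q \<in> carrier_mat d d"
    and KP: "\<And>j. j \<in> S \<Longrightarrow> K j * P = P * K j" and KQ: "\<And>j. j \<in> S \<Longrightarrow> K j * Q = Q * K j"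
    and T: "\<And>X. T X = msum d (\<lambda>j. c j \<cdot>\<^sub>m (K j * X * mat_adjoint (K j))) S"
    and A: "A \<in> carrier_mat d d" and B: "B \<in> carrier_mat d d"
  shows "mtrace (mat_adjoint A * P * hs_adjoint d T B * Q) = mtrace (mat_adjoint (hs_adjoint d T A) * P * B * Q)"
proof -
  note as = assoc_mult_mat[of _ d d _ d _ d]
  note mc = mult_carrier_mat[of _ d d _ d]
  define G where "G X j = K j * X * K j" for X j
  have G: "G X j \<in> carrier_mat d d" if "X \<in> carrier_mat d d" "j \<in> S" for X j
    using K[OF that(2)] that(1) by (simp add: G_def mc)
  have TX: "T X = msum d (\<lambda>j. c j \<cdot>\<^sub>m G X j) S" for X
    unfolding T G_def by (intro msum_cong) (simp add: Kh)
  have Tc: "T X \<in> carrier_mat d d" for X unfolding TX by simp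
  have adjG: "mat_adjoint (G X j) = G (mat_adjoint X) j" if "X \<in> carrier_mat d d" "j \<in> S" for X j
  proof -
    have Kj: "K j \<in> carrier_mat d d" using K[OF that(2)] .
    have "mat_adjoint (G X j) = mat_adjoint (K j) * mat_adjoint (K j * X)"
      unfolding G_def using adj_mult[OF mc[OF Kj that(1)] Kj] .
    also have "\<dots> = K j * (mat_adjoint X * K j)"
      using adj_mult[OF Kj that(1)] Kh[OF that(2)] by simp
    also have "\<dots> = G (mat_adjoint X) j"
      unfolding G_def using Kj adj_carrier[OF that(1)] by (simp add: as)
    finally show ?thesis .
  qed
  have adjT: "mat_adjoint (T X) = msum d (\<lambda>j. c j \<cdot>\<^sub>m G (mat_adjoint X) j) S" if X: "X \<in> carrier_mat d d" for X
  proof -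
    have "mat_adjoint (T X) = msum d (\<lambda>j. mat_adjoint (c j \<cdot>\<^sub>m G X j)) S"
      unfolding TX using G[OF X] by (intro msum_adj) simp
    also have "\<dots> = msum d (\<lambda>j. c j \<cdot>\<^sub>m G (mat_adjoint X) j) S"
      using adjG[OF X] cr by (intro msum_cong) (simp add: adj_smult)
    finally show ?thesis .
  qed
  have sa: "mtrace (mat_adjoint X * T Y) = mtrace (mat_adjoint (T X) * Y)"
    if X: "X \<in> carrier_mat d d" and Y: "Y \<in> carrier_mat d d" for X Y
  proof -
    have Xa: "mat_adjoint X \<in> carrier_mat d d" using adj_carrier[OF X] .
    have "mtrace (mat_adjoint X * T Y) = mtrace (msum d (\<lambda>j. mat_adjoint X * (c j \<cdot>\<^sub>m G Y j)) S)"
      unfolding TX using G[OF Y] Xa by (subst msum_mult_left) auto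
    also have "\<dots> = (\<Sum>j\<in>S. mtrace (mat_adjoint X * (c j \<cdot>\<^sub>m G Y j)))"
      using G[OF Y] Xa by (intro mtrace_msum) (simp add: mc)
    also have "\<dots> = (\<Sum>j\<in>S. c j * mtrace (mat_adjoint X * G Y j))"
    proof (intro sum.cong refl)
      fix j assume j: "j \<in> S"
      show "mtrace (mat_adjoint X * (c j \<cdot>\<^sub>m G Y j)) = c j * mtrace (mat_adjoint X * G Y j)"
        using mult_smult_distrib[OF Xa G[OF Y j]] mtrace_smult[OF mc[OF Xa G[OF Y j]]] by simp
    qed
    also have "\<dots> = (\<Sum>j\<in>S. c j * mtrace (G (mat_adjoint X) j * Y))"
    proof (intro sum.cong refl arg_cong[where f = "\<lambda>x. _ * x"])
      fix j assume j: "j \<in> S"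
      have Kj: "K j \<in> carrier_mat d d" using K[OF j] .
      have "mtrace (mat_adjoint X * G Y j) = mtrace ((mat_adjoint X * (K j * Y)) * K j)"
        unfolding G_def using Kj Xa Y by (simp add: as mc)
      also have "\<dots> = mtrace (K j * (mat_adjoint X * (K j * Y)))"
        using Kj Xa Y by (intro mtrace_comm) (simp_all add: mc)
      also have "\<dots> = mtrace (G (mat_adjoint X) j * Y)"
        unfolding G_def using Kj Xa Y by (simp add: as mc)
      finally show "mtrace (mat_adjoint X * G Y j) = mtrace (G (mat_adjoint X) j * Y)" .
    qed
    also have "\<dots> = (\<Sum>j\<in>S. mtrace ((c j \<cdot>\<^sub>m G (mat_adjoint X) j) * Y))"
    proof (intro sum.cong refl)
      fix j assume j: "j \<in> S"
      show "c j * mtrace (G (mat_adjoint X) j * Y) = mtrace ((c j \<cdot>\<^sub>m G (mat_adjoint X) j) * Y)"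
        using mult_smult_assoc_mat[OF G[OF Xa j] Y] mtrace_smult[OF mc[OF G[OF Xa j] Y]] by simp
    qed
    also have "\<dots> = mtrace (msum d (\<lambda>j. (c j \<cdot>\<^sub>m G (mat_adjoint X) j) * Y) S)"
      using G[OF Xa] Y by (intro mtrace_msum[symmetric]) (simp add: mc)
    also have "\<dots> = mtrace (mat_adjoint (T X) * Y)"
      unfolding adjT[OF X] using G[OF Xa] Y by (subst msum_mult_right) auto
    finally show ?thesis .
  qed
  have hsB: "hs_adjoint d T B = T B" by (rule hs_adjoint_eq[OF _ sa B]) (simp add: Tc)
  have hsA: "hs_adjoint d T A = T A" by (rule hs_adjoint_eq[OF _ sa A]) (simp add: Tc)
  have Aa: "mat_adjoint A \<in> carrier_mat d d" using adj_carrier[OF A] .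
  have AP: "mat_adjoint A * P \<in> carrier_mat d d" using Aa P by (simp add: mc)
  have "mtrace (mat_adjoint A * P * T B * Q) = mtrace (msum d (\<lambda>j. mat_adjoint A * P * (c j \<cdot>\<^sub>m G B j) * Q) S)"
  proof -
    have "mat_adjoint A * P * T B = msum d (\<lambda>j. mat_adjoint A * P * (c j \<cdot>\<^sub>m G B j)) S"
      unfolding TX using G[OF B] AP by (subst msum_mult_left) auto
    hence "mat_adjoint A * P * T B * Q = msum d (\<lambda>j. mat_adjoint A * P * (c j \<cdot>\<^sub>m G B j) * Q) S"
      using G[OF B] AP Q by (simp add: msum_mult_right mc)
    thus ?thesis by simp
  qed
  also have "\<dots> = (\<Sum>j\<in>S. c j * mtrace (mat_adjoint A * P * G B j * Q))"
  proof -
    have "mat_adjoint A * P * (c j \<cdot>\<^sub>m G B j) * Q = c j \<cdot>\<^sub>m (mat_adjoint A * P * G B j * Q)" if j: "j \<in> S" for j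
      using G[OF B j] AP Q by (simp add: mult_smult_distrib[OF AP] mult_smult_assoc_mat[of _ d d _ d] mc)
    note H = this
    have "mtrace (msum d (\<lambda>j. mat_adjoint A * P * (c j \<cdot>\<^sub>m G B j) * Q) S)
       = (\<Sum>j\<in>S. mtrace (mat_adjoint A * P * (c j \<cdot>\<^sub>m G B j) * Q))"
      by (rule mtrace_msum) (use G[OF B] AP Q in \<open>simp add: mc\<close>)
    also have "\<dots> = (\<Sum>j\<in>S. c j * mtrace (mat_adjoint A * P * G B j * Q))"
    proof (intro sum.cong refl)
      fix j assume j: "j \<in> S"
      show "mtrace (mat_adjoint A * P * (c j \<cdot>\<^sub>m G B j) * Q) = c j * mtrace (mat_adjoint A * P * G B j * Q)"
        using H[OF j] mtrace_smult[OF mc[OF mc[OF AP G[OF B j]] Q]] by simp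
    qed
    finally show ?thesis .
  qed
  also have "\<dots> = (\<Sum>j\<in>S. c j * mtrace (G (mat_adjoint A) j * P * B * Q))"
    using per_j[OF Aa K P Q B KP KQ] by (intro sum.cong refl) (simp add: G_def)
  also have "\<dots> = mtrace (msum d (\<lambda>j. (c j \<cdot>\<^sub>m G (mat_adjoint A) j) * P * B * Q) S)"
  proof -
    have "(c j \<cdot>\<^sub>m G (mat_adjoint A) j) * P * B * Q = c j \<cdot>\<^sub>m (G (mat_adjoint A) j * P * B * Q)" if j: "j \<in> S" for j
      using G[OF Aa j] P B Q by (simp add: mult_smult_assoc_mat[of _ d d _ d] mc)
    note H = this
    have "mtrace (msum d (\<lambda>j. (c j \<cdot>\<^sub>m G (mat_adjoint A) j) * P * B * Q) S)
       = (\<Sum>j\<in>S. mtrace ((c j \<cdot>\<^sub>m G (mat_adjoint A) j) * P * B * Q))"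
      by (rule mtrace_msum) (use G[OF Aa] P B Q in \<open>simp add: mc\<close>)
    also have "\<dots> = (\<Sum>j\<in>S. c j * mtrace (G (mat_adjoint A) j * P * B * Q))"
    proof (intro sum.cong refl)
      fix j assume j: "j \<in> S"
      show "mtrace ((c j \<cdot>\<^sub>m G (mat_adjoint A) j) * P * B * Q) = c j * mtrace (G (mat_adjoint A) j * P * B * Q)"
        using H[OF j] mtrace_smult[OF mc[OF mc[OF mc[OF G[OF Aa j] P] B] Q]] by simp
    qed
    finally show ?thesis by simp
  qed
  also have "\<dots> = mtrace (mat_adjoint (T A) * P * B * Q)"
  proof -
    have "mat_adjoint (T A) * P * B * Q = msum d (\<lambda>j. (c j \<cdot>\<^sub>m G (mat_adjoint A) j) * P * B * Q) S"
      unfolding adjT[OF A] using G[OF Aa] P B Q by (simp add: msum_mult_right mc)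
    thus ?thesis by simp
  qed
  finally show ?thesis unfolding hsA hsB .
qed




lemma comm_smult_left: fixes A B :: "complex mat"
  assumes A: "A \<in> carrier_mat d d" and B: "B \<in> carrier_mat d d" and AB: "A * B = B * A"
  shows "(c \<cdot>\<^sub>m A) * B = B * (c \<cdot>\<^sub>m A)"
  using mult_smult_assoc_mat[OF A B, of c] mult_smult_distrib[OF B A, of c] AB by simp

lemma comm_smult_right: fixes A B :: "complex mat"
  assumes A: "A \<in> carrier_mat d d" and B: "B \<in> carrier_mat d d" and AB: "A * B = B * A"
  shows "A * (c \<cdot>\<^sub>m B) = (c \<cdot>\<^sub>m B) * A"
  using comm_smult_left[OF B A AB[symmetric], of c] by simp

lemma comm_minus: fixes A B C :: "complex mat"
  assumes A: "A \<in> carrier_mat d d" and B: "B \<in> carrier_mat d d" and C: "C \<in> carrier_mat d d"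
    and AB: "A * B = B * A" and AC: "A * C = C * A"
  shows "A * (B - C) = (B - C) * A"
  using mult_minus_distrib_mat[OF A B C] minus_mult_distrib_mat[OF B C A] AB AC by simp

lemma comm_one: fixes A :: "complex mat"
  assumes A: "A \<in> carrier_mat d d" shows "A * 1\<^sub>m d = 1\<^sub>m d * A"
  using A by simp

lemma comm_msum: fixes A :: "complex mat"
  assumes A: "A \<in> carrier_mat d d" and F: "\<And>x. x \<in> S \<Longrightarrow> F x \<in> carrier_mat d d"
    and AF: "\<And>x. x \<in> S \<Longrightarrow> A * F x = F x * A"
  shows "A * msum d F S = msum d F S * A"
proof -
  have "A * msum d F S = msum d (\<lambda>x. A * F x) S" by (rule msum_mult_left) (use A F in auto)
  also have "\<dots> = msum d (\<lambda>x. F x * A) S" using AF by (rule msum_cong)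
  also have "\<dots> = msum d F S * A" by (rule msum_mult_right[symmetric]) (use A F in auto)
  finally show ?thesis .
qed

lemma one_smult_mat: "(1::complex) \<cdot>\<^sub>m M = M"
  by (rule eq_matI) auto

lemma grid_rev: assumes "l \<le> gqpe_N m" shows "gqpe_grid m (gqpe_N m - l) = - gqpe_grid m l"
  using assms by (simp add: gqpe_grid_def of_nat_diff algebra_simps)

lemma ghat_neg: "ghat \<gamma> (- x) = ghat \<gamma> x"
  by (simp add: ghat_def)

lemma sum_rev1: "(\<Sum>l\<in>{1..<(N::nat)}. g (N - l)) = (\<Sum>l\<in>{1..<N}. g l :: complex)"
  by (rule sum.reindex_bij_witness[where i = "\<lambda>l. N - l" and j = "\<lambda>l. N - l"]) auto

lemma msum_rev1: "msum d (\<lambda>l. F (N - l)) {1..<(N::nat)} = msum d F {1..<N}"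
proof -
  have "(\<Sum>l\<in>{1..<N}. F (N - l) $$ ij) = (\<Sum>l\<in>{1..<N}. F l $$ ij)" for ij
    by (rule sum_rev1[where g = "\<lambda>l. F l $$ ij"])
  thus ?thesis unfolding msum_def by simp
qed

context
  fixes Obs :: "complex mat" and \<kappa> \<gamma> :: real and m d :: nat
  assumes Obs: "Obs \<in> carrier_mat d d" and Obsh: "mat_adjoint Obs = Obs"
begin

definition "Yj j = complex_of_real (gqpe_grid m j) \<cdot>\<^sub>m 1\<^sub>m d - complex_of_real (1 / \<kappa>) \<cdot>\<^sub>m Obs"
definition "al l = 2 * pi * \<i> * complex_of_real (gqpe_grid m l)"
definition "Fl j l = complex_of_real (ghat \<gamma> (gqpe_grid m l)) \<cdot>\<^sub>m mexp (al l \<cdot>\<^sub>m Yj j)"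
definition "c0 = complex_of_real (gqpe_h m powr (3/2) / gqpe_C m \<gamma>)"

lemma Yj: "Yj j \<in> carrier_mat d d"
  unfolding Yj_def using Obs by (intro minus_carrier_mat) simp

lemma Yjh: "mat_adjoint (Yj j) = Yj j"
proof -
  have "mat_adjoint (Yj j) = mat_adjoint (complex_of_real (gqpe_grid m j) \<cdot>\<^sub>m 1\<^sub>m d) - mat_adjoint (complex_of_real (1 / \<kappa>) \<cdot>\<^sub>m Obs)"
    unfolding Yj_def using Obs by (intro adj_minus[of _ d d]) simp_all
  also have "\<dots> = Yj j" unfolding Yj_def adj_smult using Obsh by simp
  finally show ?thesis .
qed

lemma Fl: "Fl j l \<in> carrier_mat d d"
  unfolding Fl_def using Yj[of j] by simp

lemma kraus_eq: "gqpe_kraus Obs \<kappa> m \<gamma> j = c0 \<cdot>\<^sub>m msum d (Fl j) {1..<gqpe_N m}"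
proof -
  have "dim_row Obs = d" using Obs by auto
  have "(2 * pi * \<i> * complex_of_real (gqpe_grid m l)) \<cdot>\<^sub>m
          (complex_of_real (gqpe_grid m j) \<cdot>\<^sub>m 1\<^sub>m d - complex_of_real (1 / \<kappa>) \<cdot>\<^sub>m Obs) = al l \<cdot>\<^sub>m Yj j" for l
    by (simp add: al_def Yj_def)
  thus ?thesis using \<open>dim_row Obs = d\<close> unfolding gqpe_kraus_def Let_def c0_def Fl_def by simp
qed

lemma kraus_carrier: "gqpe_kraus Obs \<kappa> m \<gamma> j \<in> carrier_mat d d"
  unfolding kraus_eq by simp

lemma Fl_adj: assumes l: "l \<in> {1..<gqpe_N m}"
  shows "mat_adjoint (Fl j l) = Fl j (gqpe_N m - l)"
proof -
  have le: "l \<le> gqpe_N m" using l by auto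
  have X: "al l \<cdot>\<^sub>m Yj j \<in> carrier_mat d d" using Yj[of j] by simp
  have e1: "mat_adjoint (mexp (al l \<cdot>\<^sub>m Yj j)) = mexp (mat_adjoint (al l \<cdot>\<^sub>m Yj j))"
    using mexp_adj[OF X] by simp
  have "mat_adjoint (Fl j l) = cnj (complex_of_real (ghat \<gamma> (gqpe_grid m l))) \<cdot>\<^sub>m mat_adjoint (mexp (al l \<cdot>\<^sub>m Yj j))"
    unfolding Fl_def by (rule adj_smult)
  also have "\<dots> = complex_of_real (ghat \<gamma> (gqpe_grid m l)) \<cdot>\<^sub>m mexp (mat_adjoint (al l \<cdot>\<^sub>m Yj j))"
    unfolding e1 by simp
  also have "mat_adjoint (al l \<cdot>\<^sub>m Yj j) = al (gqpe_N m - l) \<cdot>\<^sub>m Yj j"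
    unfolding adj_smult Yjh by (simp add: al_def grid_rev[OF le])
  finally show ?thesis unfolding Fl_def grid_rev[OF le] ghat_neg .
qed

lemma kraus_herm: "mat_adjoint (gqpe_kraus Obs \<kappa> m \<gamma> j) = gqpe_kraus Obs \<kappa> m \<gamma> j"
proof -
  have "mat_adjoint (gqpe_kraus Obs \<kappa> m \<gamma> j) = cnj c0 \<cdot>\<^sub>m msum d (\<lambda>l. mat_adjoint (Fl j l)) {1..<gqpe_N m}"
    unfolding kraus_eq adj_smult using Fl by (subst msum_adj) auto
  also have "\<dots> = c0 \<cdot>\<^sub>m msum d (\<lambda>l. Fl j (gqpe_N m - l)) {1..<gqpe_N m}"
  proof -
    have "msum d (\<lambda>l. mat_adjoint (Fl j l)) {1..<gqpe_N m} = msum d (\<lambda>l. Fl j (gqpe_N m - l)) {1..<gqpe_N m}"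
      by (rule msum_cong) (rule Fl_adj)
    moreover have "cnj c0 = c0" by (simp add: c0_def)
    ultimately show ?thesis by simp
  qed
  also have "\<dots> = gqpe_kraus Obs \<kappa> m \<gamma> j" unfolding kraus_eq msum_rev1 ..
  finally show ?thesis .
qed

lemma kraus_comm:
  fixes H :: "complex mat" and b :: complex
  assumes H: "H \<in> carrier_mat d d" and HO: "H * Obs = Obs * H"
  shows "mexp (b \<cdot>\<^sub>m H) * gqpe_kraus Obs \<kappa> m \<gamma> j = gqpe_kraus Obs \<kappa> m \<gamma> j * mexp (b \<cdot>\<^sub>m H)"
proof -
  have Hb: "b \<cdot>\<^sub>m H \<in> carrier_mat d d" using H by simp
  have M: "mexp (b \<cdot>\<^sub>m H) \<in> carrier_mat d d" using Hb by simp
  have HY: "H * Yj j = Yj j * H"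
    unfolding Yj_def using H Obs
    by (intro comm_minus[of _ d] comm_smult_right[of _ d] comm_one HO) simp_all
  have HbX: "(b \<cdot>\<^sub>m H) * (al l \<cdot>\<^sub>m Yj j) = (al l \<cdot>\<^sub>m Yj j) * (b \<cdot>\<^sub>m H)" for l
    using H Yj[of j] by (intro comm_smult_left[of _ d] comm_smult_right[of _ d] HY) simp_all
  have MX: "mexp (b \<cdot>\<^sub>m H) * (al l \<cdot>\<^sub>m Yj j) = (al l \<cdot>\<^sub>m Yj j) * mexp (b \<cdot>\<^sub>m H)" for l
    using Yj[of j] Hb by (intro mexp_commute[OF Hb] HbX) simp
  have MF: "mexp (b \<cdot>\<^sub>m H) * Fl j l = Fl j l * mexp (b \<cdot>\<^sub>m H)" for l
  proof -
    have X: "al l \<cdot>\<^sub>m Yj j \<in> carrier_mat d d" using Yj[of j] by simp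
    have "mexp (al l \<cdot>\<^sub>m Yj j) * mexp (b \<cdot>\<^sub>m H) = mexp (b \<cdot>\<^sub>m H) * mexp (al l \<cdot>\<^sub>m Yj j)"
      using mexp_commute[OF X M] MX[of l] by simp
    thus ?thesis unfolding Fl_def using X M
      by (intro comm_smult_right[of _ d]) simp_all
  qed
  have "mexp (b \<cdot>\<^sub>m H) * msum d (Fl j) {1..<gqpe_N m} = msum d (Fl j) {1..<gqpe_N m} * mexp (b \<cdot>\<^sub>m H)"
    using M Fl MF by (intro comm_msum) auto
  thus ?thesis unfolding kraus_eq using M by (intro comm_smult_right[of _ d]) simp_all
qed

end

theorem theorem6p2:
  fixes n :: nat and H Obs :: "complex mat" and \<beta> \<kappa> \<gamma> :: real and m :: nat
  assumes "H \<in> carrier_mat (2 ^ n) (2 ^ n)" and "hermitian H"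
    and "\<beta> > 0"
    and "Obs \<in> carrier_mat (2 ^ n) (2 ^ n)" and "hermitian Obs"
    and "H * Obs = Obs * H"
    and "\<kappa> > 0" and "\<kappa> \<ge> opnorm Obs"
    and "m > 0" and "\<gamma> > 0"
  shows "\<forall>s. 0 \<le> s \<and> s \<le> 1 \<longrightarrow>
           s_detailed_balance (2 ^ n) (gqpe_channel Obs \<kappa> m \<gamma>) (gibbs \<beta> H) s \<and>
           s_detailed_balance (2 ^ n) (gqpe_hat Obs \<kappa> m \<gamma> (gibbs \<beta> H)) (gibbs \<beta> H) s"
proof (intro allI impI)
  fix s :: real
  define d where "d = (2::nat) ^ n"
  have Hc: "H \<in> carrier_mat d d" using assms(1) by (simp add: d_def)
  have Hh: "mat_adjoint H = H" using assms(2) by (simp add: hermitian_def)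
  have Obs: "Obs \<in> carrier_mat d d" using assms(4) by (simp add: d_def)
  have Obsh: "mat_adjoint Obs = Obs" using assms(5) by (simp add: hermitian_def)
  have dO: "dim_row Obs = d" using Obs by auto
  have HO: "H * Obs = Obs * H" by (rule assms(6))
  note mc = mult_carrier_mat[of _ d d _ d]
  note as = assoc_mult_mat[of _ d d _ d _ d]
  define K where "K = gqpe_kraus Obs \<kappa> m \<gamma>"
  define S where "S = {0..<gqpe_N m}"
  define Hb where "Hb = complex_of_real (- \<beta>) \<cdot>\<^sub>m H"
  define M where "M = mexp Hb"
  define \<rho> where "\<rho> = gibbs \<beta> H"
  have Hbc: "Hb \<in> carrier_mat d d" using Hc by (simp add: Hb_def)
  have Mc: "M \<in> carrier_mat d d" using Hbc by (simp add: M_def)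
  have Hbh: "mat_adjoint Hb = Hb" unfolding Hb_def adj_smult Hh by simp
  have Mh: "mat_adjoint M = M" unfolding M_def using mexp_adj[OF Hbc] Hbh by simp
  have rho_eq: "\<rho> = (1 / mtrace M) \<cdot>\<^sub>m M" unfolding \<rho>_def gibbs_def M_def Hb_def ..
  have rc: "\<rho> \<in> carrier_mat d d" unfolding rho_eq using Mc by simp
  have tr: "cnj (mtrace M) = mtrace M" using mtrace_adj[OF Mc] Mh by simp
  have rh: "mat_adjoint \<rho> = \<rho>" unfolding rho_eq adj_smult Mh using tr by simp
  have Kc: "K j \<in> carrier_mat d d" for j unfolding K_def by (rule kraus_carrier[OF Obs Obsh])
  have Kh: "mat_adjoint (K j) = K j" for j unfolding K_def by (rule kraus_herm[OF Obs Obsh])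
  have MK: "M * K j = K j * M" for j unfolding K_def M_def Hb_def by (rule kraus_comm[OF Obs Obsh Hc HO])
  have rK: "\<rho> * K j = K j * \<rho>" for j
    unfolding rho_eq using comm_smult_left[OF Mc Kc MK] .
  have mp: "mpow \<rho> t \<in> carrier_mat d d \<and> mpow \<rho> t * K j = K j * mpow \<rho> t" for t j
    unfolding mpow_def by (rule herm_fun_commute[OF rc rh Kc rK])
  have Pc: "mpow \<rho> t \<in> carrier_mat d d" for t using mp by blast
  have KP: "K j * mpow \<rho> t = mpow \<rho> t * K j" for t j using mp by metis
  have ch: "s_detailed_balance d (gqpe_channel Obs \<kappa> m \<gamma>) \<rho> s"
    unfolding s_detailed_balance_def inner_s_def
  proof (intro ballI)
    fix A B :: "complex mat" assume A: "A \<in> carrier_mat d d" and B: "B \<in> carrier_mat d d"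
    have T: "gqpe_channel Obs \<kappa> m \<gamma> X = msum d (\<lambda>j. 1 \<cdot>\<^sub>m (K j * X * mat_adjoint (K j))) S" for X
      unfolding gqpe_channel_def dO K_def[symmetric] S_def[symmetric] one_smult_mat ..
    show "mtrace (mat_adjoint A * mpow \<rho> (1 - s) * hs_adjoint d (gqpe_channel Obs \<kappa> m \<gamma>) B * mpow \<rho> s) =
          mtrace (mat_adjoint (hs_adjoint d (gqpe_channel Obs \<kappa> m \<gamma>) A) * mpow \<rho> (1 - s) * B * mpow \<rho> s)"
      by (rule db_general[OF Kc Kh _ Pc Pc KP KP T A B]) simp
  qed
  define E where "E = gqpe_expect Obs \<kappa> m \<gamma> \<rho>"
  have Er: "cnj E = E"
  proof -
    have inner: "cnj (mtrace (K j * \<rho> * mat_adjoint (K j))) = mtrace (K j * \<rho> * mat_adjoint (K j))" for j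
    proof -
      have c: "K j * \<rho> * mat_adjoint (K j) \<in> carrier_mat d d" using Kc[of j] rc by (simp add: mc Kh)
      have "mat_adjoint (K j * \<rho> * mat_adjoint (K j)) = mat_adjoint (mat_adjoint (K j)) * mat_adjoint (K j * \<rho>)"
        using adj_mult[OF mc[OF Kc rc] adj_carrier[OF Kc]] .
      also have "\<dots> = K j * (mat_adjoint \<rho> * mat_adjoint (K j))"
        using adj_mult[OF Kc rc] by simp
      also have "\<dots> = K j * \<rho> * mat_adjoint (K j)" using Kc[of j] rc rh by (simp add: as Kh)
      finally show ?thesis using mtrace_adj[OF c] by simp
    qed
    show ?thesis unfolding E_def gqpe_expect_def K_def[symmetric] S_def[symmetric]
      by (simp add: inner)
  qed
  have hat: "s_detailed_balance d (gqpe_hat Obs \<kappa> m \<gamma> \<rho>) \<rho> s"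
    unfolding s_detailed_balance_def inner_s_def
  proof (intro ballI)
    fix A B :: "complex mat" assume A: "A \<in> carrier_mat d d" and B: "B \<in> carrier_mat d d"
    have T: "gqpe_hat Obs \<kappa> m \<gamma> \<rho> X =
       msum d (\<lambda>j. (complex_of_real (gqpe_w \<kappa> m j) - E) \<cdot>\<^sub>m (K j * X * mat_adjoint (K j))) S" for X
      unfolding gqpe_hat_def dO K_def[symmetric] S_def[symmetric] E_def ..
    have cr: "cnj (complex_of_real (gqpe_w \<kappa> m j) - E) = complex_of_real (gqpe_w \<kappa> m j) - E" for j
      using Er by simp
    show "mtrace (mat_adjoint A * mpow \<rho> (1 - s) * hs_adjoint d (gqpe_hat Obs \<kappa> m \<gamma> \<rho>) B * mpow \<rho> s) =
          mtrace (mat_adjoint (hs_adjoint d (gqpe_hat Obs \<kappa> m \<gamma> \<rho>) A) * mpow \<rho> (1 - s) * B * mpow \<rho> s)"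
      by (rule db_general[OF Kc Kh cr Pc Pc KP KP T A B])
  qed
  show "s_detailed_balance (2 ^ n) (gqpe_channel Obs \<kappa> m \<gamma>) (gibbs \<beta> H) s \<and>
        s_detailed_balance (2 ^ n) (gqpe_hat Obs \<kappa> m \<gamma> (gibbs \<beta> H)) (gibbs \<beta> H) s"
    using ch hat unfolding d_def \<rho>_def by blast
qed


end
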